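(* Fix a monomial order on $S=K[x_1,\ldots,x_n]$ and let $J$ and $E$ be ideals of $S$. The following conditions are equivalent: (a) $\mathrm{in}(J+E)=\mathrm{in}(J)+\mathrm{in}(E)$; (b) for any $\mathcal G_J\in \mathrm{Gr}(J)$ and any $\mathcal G_E\in\mathrm{Gr}(E)$, we have $\mathcal G_J\cup\mathcal G_E\in \mathrm{Gr}(J+E)$; (c) there exist $\mathcal G_J\in \mathrm{Gr}(J)$ and $\mathcal G_E\in\mathrm{Gr}(E)$ such that $\mathcal G_J\cup\mathcal G_E\in \mathrm{Gr}(J+E)$; (d) $\mathrm{in}(J\cap E)=\mathrm{in}(J)\cap\mathrm{in}(E)$; (e) for any nonzero $f\in J$ and nonzero $g\in E$ there exists $h\in J\cap E$ with $\mathrm{in}(h)=\mathrm{lcm}(\mathrm{in}(f),\mathrm{in}(g))$; (f) for any $0\neq h\in J+E$ there exist $f\in J$ and $g\in E$ with $h=f-g$ and such that either one of $f,g$ is zero, or both are nonzero and $\mathrm{in}(f)\neq \mathrm{in}(g)$.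
   Context: $K$ is a field and $S=K[x_1,\ldots,x_n]$ with a fixed monomial order. For $0\neq f\in S$, $\mathrm{in}(f)$ denotes its leading monomial and $\mathrm{LT}(f)$ its leading term. For an ideal $I\subseteq S$, $\mathrm{in}(I)$ is the ideal generated by $\{\mathrm{in}(f): 0\ne f\in I\}$, and $\mathrm{Gr}(I)$ denotes the set of all Gröbner bases of $I$ with respect to the fixed monomial order. *)

theory Defs
  imports "HOL-Library.Poly_Mapping"
begin

text \<open>Polynomials in the variables of the finite type 'v over a field 'a are
  finitely supported maps from monomials (exponent vectors) to coefficients.\<close>

type_synonym ('v, 'a) mpoly = "('v \<Rightarrow>\<^sub>0 nat) \<Rightarrow>\<^sub>0 'a"

text \<open>A monomial order, given as its non-strict relation ord (ord s t means s \<le> t):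
  a total order on monomials, compatible with multiplication, with 1 the least monomial.\<close>
definition monomial_order :: "(('v \<Rightarrow>\<^sub>0 nat) \<Rightarrow> ('v \<Rightarrow>\<^sub>0 nat) \<Rightarrow> bool) \<Rightarrow> bool" where
  "monomial_order ord \<longleftrightarrow>
     (\<forall>s. ord s s) \<and>
     (\<forall>s t. ord s t \<and> ord t s \<longrightarrow> s = t) \<and>
     (\<forall>s t u. ord s t \<and> ord t u \<longrightarrow> ord s u) \<and>
     (\<forall>s t. ord s t \<or> ord t s) \<and>
     (\<forall>s t u. ord s t \<longrightarrow> ord (s + u) (t + u)) \<and>
     (\<forall>s. ord 0 s)"

definition lm :: "(('v \<Rightarrow>\<^sub>0 nat) \<Rightarrow> ('v \<Rightarrow>\<^sub>0 nat) \<Rightarrow> bool) \<Rightarrow> ('v, 'a::zero) mpoly \<Rightarrow> ('v \<Rightarrow>\<^sub>0 nat)" where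
  "lm ord f = (THE m. m \<in> Poly_Mapping.keys f \<and> (\<forall>m' \<in> Poly_Mapping.keys f. ord m' m))"

definition mono :: "('v \<Rightarrow>\<^sub>0 nat) \<Rightarrow> ('v, 'a::{zero,one}) mpoly" where
  "mono m = Poly_Mapping.single m 1"

definition is_ideal :: "'r::comm_ring_1 set \<Rightarrow> bool" where
  "is_ideal I \<longleftrightarrow> 0 \<in> I \<and> (\<forall>x\<in>I. \<forall>y\<in>I. x + y \<in> I) \<and> (\<forall>r. \<forall>x\<in>I. r * x \<in> I)"

definition ideal_gen :: "'r::comm_ring_1 set \<Rightarrow> 'r set" where
  "ideal_gen A = \<Inter>{I. is_ideal I \<and> A \<subseteq> I}"

definition ideal_sum :: "'r::comm_ring_1 set \<Rightarrow> 'r set \<Rightarrow> 'r set" where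
  "ideal_sum I J = {x + y | x y. x \<in> I \<and> y \<in> J}"

definition init_ideal :: "(('v \<Rightarrow>\<^sub>0 nat) \<Rightarrow> ('v \<Rightarrow>\<^sub>0 nat) \<Rightarrow> bool) \<Rightarrow> ('v, 'a::field) mpoly set \<Rightarrow> ('v, 'a) mpoly set" where
  "init_ideal ord I = ideal_gen {mono (lm ord f) | f. f \<in> I \<and> f \<noteq> 0}"

definition groebner_basis :: "(('v \<Rightarrow>\<^sub>0 nat) \<Rightarrow> ('v \<Rightarrow>\<^sub>0 nat) \<Rightarrow> bool) \<Rightarrow> ('v, 'a::field) mpoly set \<Rightarrow> ('v, 'a) mpoly set \<Rightarrow> bool" where
  "groebner_basis ord I G \<longleftrightarrow> finite G \<and> G \<subseteq> I \<and> 0 \<notin> G \<and>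
     init_ideal ord I = ideal_gen {mono (lm ord g) | g. g \<in> G}"

lift_definition mlcm :: "('v \<Rightarrow>\<^sub>0 nat) \<Rightarrow> ('v \<Rightarrow>\<^sub>0 nat) \<Rightarrow> ('v \<Rightarrow>\<^sub>0 nat)" is
  "\<lambda>s t v. max (s v) (t v)"
proof -
  fix s t :: "'v \<Rightarrow> nat"
  assume "finite {x. s x \<noteq> 0}" "finite {x. t x \<noteq> 0}"
  then have "finite ({x. s x \<noteq> 0} \<union> {x. t x \<noteq> 0})" by simp
  then show "finite {x. max (s x) (t x) \<noteq> 0}"
    by (rule rev_finite_subset) auto
qed

end

theory Submission
  imports Defs Complex_Main
begin


lemma ideal_gen_ideal: "is_ideal (ideal_gen A)"
  unfolding ideal_gen_def is_ideal_def by auto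

lemma ideal_gen_sup: "A \<subseteq> ideal_gen A"
  unfolding ideal_gen_def by auto

lemma ideal_gen_least: "is_ideal I \<Longrightarrow> A \<subseteq> I \<Longrightarrow> ideal_gen A \<subseteq> I"
  unfolding ideal_gen_def by auto

lemma ideal_gen_mono: "A \<subseteq> B \<Longrightarrow> ideal_gen A \<subseteq> ideal_gen B"
  by (meson ideal_gen_ideal ideal_gen_least ideal_gen_sup order_trans)

lemma ideal_0: "is_ideal I \<Longrightarrow> 0 \<in> I" unfolding is_ideal_def by auto
lemma ideal_add: "is_ideal I \<Longrightarrow> x \<in> I \<Longrightarrow> y \<in> I \<Longrightarrow> x + y \<in> I" unfolding is_ideal_def by auto
lemma ideal_mult: "is_ideal I \<Longrightarrow> x \<in> I \<Longrightarrow> r * x \<in> I" unfolding is_ideal_def by auto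
lemma ideal_uminus: "is_ideal I \<Longrightarrow> x \<in> I \<Longrightarrow> - x \<in> I"
  using ideal_mult[of I x "-1"] by simp
lemma ideal_diff: "is_ideal I \<Longrightarrow> x \<in> I \<Longrightarrow> y \<in> I \<Longrightarrow> x - y \<in> I"
  using ideal_add[of I x "-y"] ideal_uminus[of I y] by simp
lemma ideal_sum_closed: "is_ideal I \<Longrightarrow> (\<And>x. x \<in> S \<Longrightarrow> f x \<in> I) \<Longrightarrow> sum f S \<in> I"
  by (induction S rule: infinite_finite_induct) (auto intro: ideal_0 ideal_add)

lemma ideal_inter: "is_ideal I \<Longrightarrow> is_ideal J \<Longrightarrow> is_ideal (I \<inter> J)"
  unfolding is_ideal_def by auto

lemma ideal_sum_ideal: "is_ideal I \<Longrightarrow> is_ideal J \<Longrightarrow> is_ideal (ideal_sum I J)"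
  unfolding is_ideal_def ideal_sum_def
proof (intro conjI ballI allI)
  assume a: "0 \<in> I \<and> (\<forall>x\<in>I. \<forall>y\<in>I. x + y \<in> I) \<and> (\<forall>r. \<forall>x\<in>I. r * x \<in> I)"
     "0 \<in> J \<and> (\<forall>x\<in>J. \<forall>y\<in>J. x + y \<in> J) \<and> (\<forall>r. \<forall>x\<in>J. r * x \<in> J)"
  show "(0::'a) \<in> {x + y |x y. x \<in> I \<and> y \<in> J}" using a by force
  fix x y assume "x \<in> {x + y |x y. x \<in> I \<and> y \<in> J}" "y \<in> {x + y |x y. x \<in> I \<and> y \<in> J}"
  then obtain a1 b1 a2 b2 where "x = a1 + b1" "y = a2 + b2" "a1 \<in> I" "a2 \<in> I" "b1 \<in> J" "b2 \<in> J" by blast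
  then show "x + y \<in> {x + y |x y. x \<in> I \<and> y \<in> J}" using a
    by (intro CollectI exI[of _ "a1+a2"] exI[of _ "b1+b2"]) (auto simp: algebra_simps)
next
  fix r x
  assume a: "0 \<in> I \<and> (\<forall>x\<in>I. \<forall>y\<in>I. x + y \<in> I) \<and> (\<forall>r. \<forall>x\<in>I. r * x \<in> I)"
     "0 \<in> J \<and> (\<forall>x\<in>J. \<forall>y\<in>J. x + y \<in> J) \<and> (\<forall>r. \<forall>x\<in>J. r * x \<in> J)"
    "x \<in> {x + y |x y. x \<in> I \<and> y \<in> J}"
  then obtain a1 b1 where "x = a1 + b1" "a1 \<in> I" "b1 \<in> J" by blast
  then show "r * x \<in> {x + y |x y. x \<in> I \<and> y \<in> J}" using a
  proof -
    have "r * x = r * a1 + r * b1" "r * a1 \<in> I" "r * b1 \<in> J" using a \<open>x = a1 + b1\<close> \<open>a1 \<in> I\<close> \<open>b1 \<in> J\<close>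
      by (auto simp: distrib_left)
    then show ?thesis by blast
  qed
qed

lemma ideal_sum_left: "is_ideal J \<Longrightarrow> I \<subseteq> ideal_sum I J"
  unfolding ideal_sum_def using ideal_0 by force
lemma ideal_sum_right: "is_ideal I \<Longrightarrow> J \<subseteq> ideal_sum I J"
  unfolding ideal_sum_def using ideal_0 by force

lemma ideal_gen_Un: "ideal_gen (X \<union> Y) = ideal_sum (ideal_gen X) (ideal_gen Y)"
proof
  show "ideal_gen (X \<union> Y) \<subseteq> ideal_sum (ideal_gen X) (ideal_gen Y)"
    apply (rule ideal_gen_least)
     apply (intro ideal_sum_ideal ideal_gen_ideal)
    using ideal_sum_left[OF ideal_gen_ideal, of "ideal_gen X" Y]
      ideal_sum_right[OF ideal_gen_ideal, of "ideal_gen Y" X] ideal_gen_sup[of X] ideal_gen_sup[of Y]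
    by blast
  show "ideal_sum (ideal_gen X) (ideal_gen Y) \<subseteq> ideal_gen (X \<union> Y)"
  proof
    fix z assume "z \<in> ideal_sum (ideal_gen X) (ideal_gen Y)"
    then obtain x y where "z = x + y" "x \<in> ideal_gen X" "y \<in> ideal_gen Y" unfolding ideal_sum_def by blast
    moreover have "ideal_gen X \<subseteq> ideal_gen (X \<union> Y)" "ideal_gen Y \<subseteq> ideal_gen (X \<union> Y)"
      by (rule ideal_gen_mono, blast)+
    ultimately show "z \<in> ideal_gen (X \<union> Y)" using ideal_add[OF ideal_gen_ideal] by blast
  qed
qed



lemma lookup_single_mult:
  "Poly_Mapping.lookup (Poly_Mapping.single u c * (f :: ('v \<Rightarrow>\<^sub>0 nat) \<Rightarrow>\<^sub>0 'a::comm_ring_1)) (u + t) = c * Poly_Mapping.lookup f t"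
proof -
  have "Poly_Mapping.lookup (Poly_Mapping.single u c * f) (u + t) = (\<Sum>l. Poly_Mapping.lookup (Poly_Mapping.single u c) l * (\<Sum>q. Poly_Mapping.lookup f q when u + t = l + q))"
    by (rule lookup_mult)
  also have "\<dots> = (\<Sum>l. (c * (\<Sum>q. Poly_Mapping.lookup f q when u + t = u + q)) when l = u)"
    by (rule Sum_any.cong) (auto simp: lookup_single when_def)
  also have "\<dots> = c * (\<Sum>q. Poly_Mapping.lookup f q when u + t = u + q)" by simp
  also have "(\<Sum>q. Poly_Mapping.lookup f q when u + t = u + q) = (\<Sum>q. Poly_Mapping.lookup f q when q = t)"
    by (rule Sum_any.cong) (auto simp: when_def)
  also have "\<dots> = Poly_Mapping.lookup f t" by simp
  finally show ?thesis .
qed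

lemma keys_single_mult:
  "Poly_Mapping.keys (Poly_Mapping.single u c * (f :: ('v \<Rightarrow>\<^sub>0 nat) \<Rightarrow>\<^sub>0 'a::comm_ring_1)) \<subseteq> (\<lambda>t. u + t) ` Poly_Mapping.keys f"
proof
  fix k assume "k \<in> Poly_Mapping.keys (Poly_Mapping.single u c * f)"
  then obtain a b where "k = a + b" "a \<in> Poly_Mapping.keys (Poly_Mapping.single u c)" "b \<in> Poly_Mapping.keys f" using keys_mult by blast
  then show "k \<in> (\<lambda>t. u + t) ` Poly_Mapping.keys f" by (auto split: if_splits)
qed

lemma poly_sum_single: "(\<Sum>t\<in>Poly_Mapping.keys p. Poly_Mapping.single t (Poly_Mapping.lookup p t)) = p"
proof (rule poly_mapping_eqI)
  fix k
  have "Poly_Mapping.lookup (\<Sum>t\<in>Poly_Mapping.keys p. Poly_Mapping.single t (Poly_Mapping.lookup p t)) k = (\<Sum>t\<in>Poly_Mapping.keys p. Poly_Mapping.lookup (Poly_Mapping.single t (Poly_Mapping.lookup p t)) k)"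
    by (simp add: lookup_sum)
  also have "\<dots> = (\<Sum>t\<in>Poly_Mapping.keys p. if t = k then Poly_Mapping.lookup p t else 0)"
    by (rule sum.cong) (auto simp: lookup_single when_def)
  also have "\<dots> = Poly_Mapping.lookup p k"
    by (simp add: sum.delta in_keys_iff)
  finally show "Poly_Mapping.lookup (\<Sum>t\<in>Poly_Mapping.keys p. Poly_Mapping.single t (Poly_Mapping.lookup p t)) k = Poly_Mapping.lookup p k" .
qed

locale mordl =
  fixes ord :: "('v \<Rightarrow>\<^sub>0 nat) \<Rightarrow> ('v \<Rightarrow>\<^sub>0 nat) \<Rightarrow> bool"
  assumes mo: "monomial_order ord"
begin

lemma refl: "ord s s" using mo unfolding monomial_order_def by blast
lemma antisym: "ord s t \<Longrightarrow> ord t s \<Longrightarrow> s = t" using mo unfolding monomial_order_def by blast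
lemma trans: "ord s t \<Longrightarrow> ord t u \<Longrightarrow> ord s u" using mo unfolding monomial_order_def by blast
lemma total: "ord s t \<or> ord t s" using mo unfolding monomial_order_def by blast
lemma addr: "ord s t \<Longrightarrow> ord (s + u) (t + u)" using mo unfolding monomial_order_def by blast
lemma addl: "ord s t \<Longrightarrow> ord (u + s) (u + t)" using addr by (simp add: add.commute)
lemma zero_le: "ord 0 s" using mo unfolding monomial_order_def by blast
lemma le_plus: "ord s (s + u)" using addr[OF zero_le[of u], of s] by (simp add: add.commute)

lemma ex_max: "finite S \<Longrightarrow> S \<noteq> {} \<Longrightarrow> \<exists>m\<in>S. \<forall>t\<in>S. ord t m"
proof (induction S rule: finite_ne_induct)
  case (singleton x) then show ?case using refl by auto
next
  case (insert x F)
  then obtain m where "m \<in> F" "\<forall>t\<in>F. ord t m" by blast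
  show ?case
  proof (cases "ord x m")
    case True
    then show ?thesis using \<open>m \<in> F\<close> \<open>\<forall>t\<in>F. ord t m\<close> by auto
  next
    case False
    then have "ord m x" using total by blast
    have "\<forall>t\<in>insert x F. ord t x"
    proof
      fix t assume "t \<in> insert x F"
      then show "ord t x"
      proof
        assume "t = x" then show ?thesis using refl by simp
      next
        assume "t \<in> F" then have "ord t m" using \<open>\<forall>t\<in>F. ord t m\<close> by blast
        then show ?thesis using trans[OF _ \<open>ord m x\<close>] by blast
      qed
    qed
    then show ?thesis by auto
  qed
qed

lemma lm_prop:
  fixes f :: "('v, 'a::zero) mpoly"
  assumes "f \<noteq> 0"
  shows "lm ord f \<in> Poly_Mapping.keys f \<and> (\<forall>t \<in> Poly_Mapping.keys f. ord t (lm ord f))"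
proof -
  have "Poly_Mapping.keys f \<noteq> {}" using assms by simp
  then obtain m where m: "m \<in> Poly_Mapping.keys f" "\<forall>t\<in>Poly_Mapping.keys f. ord t m" using ex_max[OF finite_keys] by blast
  have "lm ord f = m" unfolding lm_def
  proof (rule the_equality)
    show "m \<in> Poly_Mapping.keys f \<and> (\<forall>m'\<in>Poly_Mapping.keys f. ord m' m)" using m by blast
    fix x assume "x \<in> Poly_Mapping.keys f \<and> (\<forall>m'\<in>Poly_Mapping.keys f. ord m' x)"
    then have "ord m x" "ord x m" using m by auto
    then show "x = m" using antisym by blast
  qed
  then show ?thesis using m by simp
qed

lemma lm_in: "f \<noteq> 0 \<Longrightarrow> lm ord f \<in> Poly_Mapping.keys f" using lm_prop by blast
lemma lm_max: "t \<in> Poly_Mapping.keys f \<Longrightarrow> ord t (lm ord f)" using lm_prop[of f] by fastforce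

lemma lm_eqI: "m \<in> Poly_Mapping.keys f \<Longrightarrow> (\<And>t. t \<in> Poly_Mapping.keys f \<Longrightarrow> ord t m) \<Longrightarrow> lm ord f = m"
  using lm_prop[of f] antisym by fastforce

lemma lm_uminus: "lm ord (- (f::('v,'a::ab_group_add) mpoly)) = lm ord f"
  unfolding lm_def by simp

lemma lm_add_dom:
  fixes f g :: "('v,'a::ab_group_add) mpoly"
  assumes "f \<noteq> 0" "g = 0 \<or> (ord (lm ord g) (lm ord f) \<and> lm ord g \<noteq> lm ord f)"
  shows "f + g \<noteq> 0 \<and> lm ord (f + g) = lm ord f"
proof (cases "g = 0")
  case True then show ?thesis using assms by simp
next
  case False
  then have g: "ord (lm ord g) (lm ord f)" "lm ord g \<noteq> lm ord f" using assms(2) by simp_all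
  have nk: "lm ord f \<notin> Poly_Mapping.keys g"
  proof
    assume "lm ord f \<in> Poly_Mapping.keys g"
    then have "ord (lm ord f) (lm ord g)" by (rule lm_max)
    then show False using antisym[OF g(1)] g(2) by simp
  qed
  have "Poly_Mapping.lookup (f + g) (lm ord f) = Poly_Mapping.lookup f (lm ord f)"
    using nk by (simp add: lookup_add in_keys_iff)
  then have k: "lm ord f \<in> Poly_Mapping.keys (f + g)" using lm_in[OF assms(1)] by (simp add: in_keys_iff)
  have "lm ord (f + g) = lm ord f"
  proof (rule lm_eqI[OF k])
    fix t assume "t \<in> Poly_Mapping.keys (f + g)"
    then have "t \<in> Poly_Mapping.keys f \<or> t \<in> Poly_Mapping.keys g" using keys_add[of f g] by auto
    then show "ord t (lm ord f)"
    proof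
      assume "t \<in> Poly_Mapping.keys f" then show ?thesis by (rule lm_max)
    next
      assume "t \<in> Poly_Mapping.keys g" then have "ord t (lm ord g)" by (rule lm_max)
      then show ?thesis using g(1) by (rule trans)
    qed
  qed
  moreover have "f + g \<noteq> 0" using k by auto
  ultimately show ?thesis by simp
qed

lemma lm_diff:
  fixes f g :: "('v,'a::ab_group_add) mpoly"
  assumes "f \<noteq> 0" "g \<noteq> 0" "lm ord f \<noteq> lm ord g"
  shows "f - g \<noteq> 0 \<and> (lm ord (f - g) = lm ord f \<or> lm ord (f - g) = lm ord g)"
proof (cases "ord (lm ord g) (lm ord f)")
  case True
  then show ?thesis using lm_add_dom[of f "- g"] assms by (simp add: lm_uminus)
next
  case False
  then have "ord (lm ord f) (lm ord g)" using total by blast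
  then have "- g + f \<noteq> 0 \<and> lm ord (- g + f) = lm ord (- g)"
    using lm_add_dom[of "- g" f] assms by (simp add: lm_uminus)
  then show ?thesis by (simp add: lm_uminus)
qed

lemma lm_single_mult:
  fixes f :: "('v,'a::field) mpoly"
  assumes "f \<noteq> 0" "c \<noteq> 0"
  shows "Poly_Mapping.single u c * f \<noteq> 0 \<and> lm ord (Poly_Mapping.single u c * f) = u + lm ord f"
proof -
  have k: "u + lm ord f \<in> Poly_Mapping.keys (Poly_Mapping.single u c * f)"
    using lm_in[OF assms(1)] assms(2) by (simp add: in_keys_iff lookup_single_mult)
  have "lm ord (Poly_Mapping.single u c * f) = u + lm ord f"
  proof (rule lm_eqI[OF k])
    fix t assume "t \<in> Poly_Mapping.keys (Poly_Mapping.single u c * f)"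
    then obtain s where "s \<in> Poly_Mapping.keys f" "t = u + s" using keys_single_mult[of u c f] by blast
    then show "ord t (u + lm ord f)" using lm_max addl by blast
  qed
  then show ?thesis using k by auto
qed

end


definition upc :: "('v \<Rightarrow>\<^sub>0 nat) set \<Rightarrow> ('v \<Rightarrow>\<^sub>0 nat) set" where
  "upc X = {x + u | x u. x \<in> X}"

lemma keys_mono: "Poly_Mapping.keys (mono t :: ('v, 'a::{zero_neq_one}) mpoly) = {t}"
  unfolding mono_def by simp

lemma MI: "ideal_gen (mono ` X) = {p :: ('v, 'a::field) mpoly. Poly_Mapping.keys p \<subseteq> upc X}"
proof
  let ?S = "{p. Poly_Mapping.keys p \<subseteq> upc X} :: ('v, 'a) mpoly set"
  have id: "is_ideal ?S"
    unfolding is_ideal_def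
  proof (intro conjI ballI allI)
    show "0 \<in> ?S" by simp
    fix x y assume "x \<in> ?S" "y \<in> ?S"
    then show "x + y \<in> ?S" using keys_add[of x y] by auto
  next
    fix r x assume "x \<in> ?S"
    have "Poly_Mapping.keys (r * x) \<subseteq> upc X"
    proof
      fix k assume "k \<in> Poly_Mapping.keys (r * x)"
      then obtain a b where "k = a + b" "b \<in> Poly_Mapping.keys x" using keys_mult[of r x] by blast
      then obtain y u where "b = y + u" "y \<in> X" using \<open>x \<in> ?S\<close> unfolding upc_def by blast
      then have "k = y + (u + a)" using \<open>k = a + b\<close> by (simp add: add_ac)
      then show "k \<in> upc X" unfolding upc_def using \<open>y \<in> X\<close> by blast
    qed
    then show "r * x \<in> ?S" by simp
  qed
  show "ideal_gen (mono ` X) \<subseteq> ?S"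
  proof (rule ideal_gen_least[OF id])
    show "mono ` X \<subseteq> ?S"
    proof
      fix p :: "('v, 'a) mpoly" assume "p \<in> mono ` X"
      then obtain x where "x \<in> X" "p = mono x" by blast
      moreover have "x + 0 \<in> upc X" using \<open>x \<in> X\<close> unfolding upc_def by blast
      ultimately show "p \<in> ?S" by (simp add: keys_mono)
    qed
  qed
  show "?S \<subseteq> ideal_gen (mono ` X)"
  proof
    fix p :: "('v, 'a) mpoly" assume p: "p \<in> ?S"
    have "(\<Sum>t\<in>Poly_Mapping.keys p. Poly_Mapping.single t (Poly_Mapping.lookup p t)) \<in> ideal_gen (mono ` X)"
    proof (rule ideal_sum_closed[OF ideal_gen_ideal])
      fix t assume "t \<in> Poly_Mapping.keys p"
      then obtain x u where "t = x + u" "x \<in> X" using p unfolding upc_def by blast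
      have "Poly_Mapping.single t (Poly_Mapping.lookup p t) = Poly_Mapping.single u (Poly_Mapping.lookup p t) * mono x"
        unfolding mono_def by (simp add: mult_single \<open>t = x + u\<close> add.commute)
      moreover have "mono x \<in> ideal_gen (mono ` X)" using ideal_gen_sup \<open>x \<in> X\<close> by blast
      ultimately show "Poly_Mapping.single t (Poly_Mapping.lookup p t) \<in> ideal_gen (mono ` X)"
        using ideal_mult[OF ideal_gen_ideal] by simp
    qed
    then show "p \<in> ideal_gen (mono ` X)" by (simp add: poly_sum_single)
  qed
qed

definition LMs :: "(('v \<Rightarrow>\<^sub>0 nat) \<Rightarrow> ('v \<Rightarrow>\<^sub>0 nat) \<Rightarrow> bool) \<Rightarrow> ('v, 'a::field) mpoly set \<Rightarrow> ('v \<Rightarrow>\<^sub>0 nat) set" where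
  "LMs ord I = {lm ord f | f. f \<in> I \<and> f \<noteq> 0}"

lemma init_LMs: "init_ideal ord I = ideal_gen (mono ` LMs ord I)"
  unfolding init_ideal_def LMs_def by (rule arg_cong[where f = ideal_gen]) auto

lemma LMs_mono: "I \<subseteq> I' \<Longrightarrow> LMs ord I \<subseteq> LMs ord I'"
  unfolding LMs_def by blast

context mordl begin

lemma LMs_upc:
  assumes "is_ideal I"
  shows "upc (LMs ord I) = LMs ord I"
proof
  show "upc (LMs ord I) \<subseteq> LMs ord I"
  proof
    fix t assume "t \<in> upc (LMs ord I)"
    then obtain x u where "t = x + u" "x \<in> LMs ord I" unfolding upc_def by blast
    then obtain f where f: "f \<in> I" "f \<noteq> 0" "x = lm ord f" unfolding LMs_def by blast
    have "Poly_Mapping.single u 1 * f \<in> I" using ideal_mult[OF assms f(1)] .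
    moreover have "Poly_Mapping.single u 1 * f \<noteq> 0 \<and> lm ord (Poly_Mapping.single u 1 * f) = u + lm ord f"
      using lm_single_mult[OF f(2)] by simp
    ultimately show "t \<in> LMs ord I" unfolding LMs_def using f \<open>t = x + u\<close>
      by (intro CollectI exI[of _ "Poly_Mapping.single u 1 * f"]) (auto simp: add.commute)
  qed
  show "LMs ord I \<subseteq> upc (LMs ord I)"
  proof
    fix t assume "t \<in> LMs ord I"
    then have "t + 0 \<in> upc (LMs ord I)" unfolding upc_def by blast
    then show "t \<in> upc (LMs ord I)" by simp
  qed
qed

lemma init_char:
  assumes "is_ideal I"
  shows "init_ideal ord I = {p. Poly_Mapping.keys p \<subseteq> LMs ord I}"
  unfolding init_LMs MI LMs_upc[OF assms] ..

lemma mono_in_init: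
  assumes "is_ideal I"
  shows "(mono t \<in> init_ideal ord I) = (t \<in> LMs ord I)"
  unfolding init_char[OF assms] by (simp add: keys_mono)

end


definition mle :: "('v \<Rightarrow>\<^sub>0 nat) \<Rightarrow> ('v \<Rightarrow>\<^sub>0 nat) \<Rightarrow> bool" where
  "mle s t \<longleftrightarrow> (\<forall>v. Poly_Mapping.lookup s v \<le> Poly_Mapping.lookup t v)"

lemma mle_ex: "mle s t \<Longrightarrow> \<exists>u. t = s + u"
proof -
  assume "mle s t"
  have "t = s + (t - s)"
    by (rule poly_mapping_eqI) (use \<open>mle s t\<close> in \<open>auto simp: mle_def lookup_add lookup_minus\<close>)
  then show ?thesis by blast
qed

lemma mle_trans: "mle a b \<Longrightarrow> mle b c \<Longrightarrow> mle a c"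
  unfolding mle_def using order_trans by blast

lemma mle_antisym: "mle a b \<Longrightarrow> mle b a \<Longrightarrow> a = b"
  unfolding mle_def by (rule poly_mapping_eqI) (meson le_antisym)

lemma nat_incsub:
  fixes s :: "nat \<Rightarrow> nat"
  shows "\<exists>\<phi>::nat\<Rightarrow>nat. strict_mono \<phi> \<and> (\<forall>i j. i \<le> j \<longrightarrow> s (\<phi> i) \<le> s (\<phi> j))"
proof -
  obtain f where f: "strict_mono f" "monoseq (\<lambda>n. s (f n))" using seq_monosub by blast
  show ?thesis
  proof (cases "\<forall>m. \<forall>n\<ge>m. s (f m) \<le> s (f n)")
    case True then show ?thesis using f(1) by (intro exI[of _ f]) auto
  next
    case False
    then have dec: "\<And>m n. m \<le> n \<Longrightarrow> s (f n) \<le> s (f m)" using f(2) unfolding monoseq_def by blast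
    define c where "c = (LEAST x. \<exists>n. s (f n) = x)"
    have "\<exists>n. s (f n) = c" unfolding c_def by (rule LeastI_ex) blast
    then obtain k where k: "s (f k) = c" by blast
    have low: "c \<le> s (f n)" for n unfolding c_def by (rule Least_le) blast
    have "s (f (n + k)) = c" for n
    proof -
      have "s (f (n + k)) \<le> s (f k)" by (rule dec) simp
      then show ?thesis using low[of "n + k"] k by simp
    qed
    moreover have "strict_mono (f \<circ> (\<lambda>n. n + k))"
      using f(1) by (intro strict_mono_o) (auto simp: strict_mono_def)
    ultimately show ?thesis by (intro exI[of _ "f \<circ> (\<lambda>n. n + k)"]) auto
  qed
qed

lemma dickson_V:
  fixes m :: "nat \<Rightarrow> ('v \<Rightarrow>\<^sub>0 nat)"
  assumes "finite V"
  shows "\<exists>\<phi>::nat\<Rightarrow>nat. strict_mono \<phi> \<and> (\<forall>v\<in>V. \<forall>i j. i \<le> j \<longrightarrow> Poly_Mapping.lookup (m (\<phi> i)) v \<le> Poly_Mapping.lookup (m (\<phi> j)) v)"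
  using assms
proof (induction V rule: finite_induct)
  case empty
  show ?case by (rule exI[of _ id]) (simp add: strict_mono_def)
next
  case (insert a V)
  then obtain \<phi> :: "nat \<Rightarrow> nat" where phi: "strict_mono \<phi>" "\<forall>v\<in>V. \<forall>i j. i \<le> j \<longrightarrow> Poly_Mapping.lookup (m (\<phi> i)) v \<le> Poly_Mapping.lookup (m (\<phi> j)) v"
    by blast
  obtain \<psi> :: "nat \<Rightarrow> nat" where psi: "strict_mono \<psi>" "\<forall>i j. i \<le> j \<longrightarrow> Poly_Mapping.lookup (m (\<phi> (\<psi> i))) a \<le> Poly_Mapping.lookup (m (\<phi> (\<psi> j))) a"
    using nat_incsub[of "\<lambda>k. Poly_Mapping.lookup (m (\<phi> k)) a"] by blast
  have "strict_mono (\<phi> \<circ> \<psi>)" using phi(1) psi(1) by (rule strict_mono_o)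
  moreover have "\<forall>v\<in>insert a V. \<forall>i j. i \<le> j \<longrightarrow> Poly_Mapping.lookup (m ((\<phi> \<circ> \<psi>) i)) v \<le> Poly_Mapping.lookup (m ((\<phi> \<circ> \<psi>) j)) v"
    using psi phi(2) strict_mono_leD[OF psi(1)] by auto
  ultimately show ?case by blast
qed

lemma dickson:
  fixes m :: "nat \<Rightarrow> ('v::finite \<Rightarrow>\<^sub>0 nat)"
  shows "\<exists>i j. i < j \<and> mle (m i) (m j)"
proof -
  obtain \<phi> :: "nat \<Rightarrow> nat" where phi: "strict_mono \<phi>" "\<forall>v. \<forall>i j. i \<le> j \<longrightarrow> Poly_Mapping.lookup (m (\<phi> i)) v \<le> Poly_Mapping.lookup (m (\<phi> j)) v"
    using dickson_V[where V=UNIV and m=m, OF finite_UNIV] by auto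
  have "\<phi> 0 < \<phi> 1" using phi(1) by (simp add: strict_mono_def)
  moreover have "mle (m (\<phi> 0)) (m (\<phi> 1))" using phi(2) unfolding mle_def by simp
  ultimately show ?thesis by blast
qed

lemma wf_dickson:
  fixes r :: "(('v::finite \<Rightarrow>\<^sub>0 nat) \<times> ('v \<Rightarrow>\<^sub>0 nat)) set"
  assumes tr: "trans r" and no: "\<And>s t. (s, t) \<in> r \<Longrightarrow> mle t s \<Longrightarrow> False"
  shows "wf r"
proof (unfold wf_iff_no_infinite_down_chain, rule notI)
  assume "\<exists>f. \<forall>i. (f (Suc i), f i) \<in> r"
  then obtain f where f: "\<And>i. (f (Suc i), f i) \<in> r" by blast
  have chain: "(f (i + Suc d), f i) \<in> r" for i d
  proof (induction d)
    case 0 then show ?case using f by simp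
  next
    case (Suc d)
    have "(f (Suc (i + Suc d)), f (i + Suc d)) \<in> r" by (rule f)
    then have "(f (i + Suc (Suc d)), f (i + Suc d)) \<in> r" by simp
    then show ?case using Suc.IH by (rule transD[OF tr])
  qed
  obtain i j where "i < j" "mle (f i) (f j)" using dickson[of f] by blast
  then obtain d where "j = Suc (i + d)" using less_imp_Suc_add by blast
  then have "j = i + Suc d" by simp
  then have "(f j, f i) \<in> r" using chain[of i d] by simp
  then show False using no \<open>mle (f i) (f j)\<close> by blast
qed

lemma finite_basis:
  fixes M :: "('v::finite \<Rightarrow>\<^sub>0 nat) set"
  shows "\<exists>F \<subseteq> M. finite F \<and> M \<subseteq> upc F"
proof -
  define F where "F = {m\<in>M. \<forall>m'\<in>M. mle m' m \<longrightarrow> m' = m}"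
  have "finite F"
  proof (rule ccontr)
    assume "infinite F"
    then obtain g :: "nat \<Rightarrow> _" where g: "inj g" "range g \<subseteq> F" using infinite_countable_subset by blast
    obtain i j where ij: "i < j" "mle (g i) (g j)" using dickson[of g] by blast
    have "g j \<in> F" "g i \<in> M" using g(2) F_def by auto
    then have "g i = g j" using ij(2) unfolding F_def by blast
    then show False using g(1) ij(1) by (simp add: inj_eq)
  qed
  define R where "R = {(s, t). mle s t \<and> s \<noteq> (t::'v \<Rightarrow>\<^sub>0 nat)}"
  have wfR: "wf R"
  proof (rule wf_dickson)
    show "trans R" unfolding R_def trans_def
    proof (intro allI impI)
      fix x y z :: "'v \<Rightarrow>\<^sub>0 nat" assume a: "(x, y) \<in> {(s, t). mle s t \<and> s \<noteq> t}" "(y, z) \<in> {(s, t). mle s t \<and> s \<noteq> t}"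
      then have "mle x y" "mle y z" "x \<noteq> y" by auto
      then have "mle x z" using mle_trans by blast
      moreover have "x \<noteq> z" using \<open>mle x y\<close> \<open>mle y z\<close> \<open>x \<noteq> y\<close> mle_antisym by blast
      ultimately show "(x, z) \<in> {(s, t). mle s t \<and> s \<noteq> t}" by simp
    qed
    show "\<And>s t. (s, t) \<in> R \<Longrightarrow> mle t s \<Longrightarrow> False" unfolding R_def using mle_antisym by blast
  qed
  have "M \<subseteq> upc F"
  proof
    fix m assume "m \<in> M"
    then have mQ: "m \<in> {m'\<in>M. mle m' m}" unfolding mle_def by simp
    obtain z where z: "z \<in> {m'\<in>M. mle m' m}" "\<And>y. (y, z) \<in> R \<Longrightarrow> y \<notin> {m'\<in>M. mle m' m}"
      using wfE_min[OF wfR mQ] by blast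
    have "z \<in> F" unfolding F_def
    proof (intro CollectI conjI ballI impI)
      show "z \<in> M" using z(1) by simp
      fix m' assume "m' \<in> M" "mle m' z"
      show "m' = z"
      proof (rule ccontr)
        assume "m' \<noteq> z"
        then have "(m', z) \<in> R" unfolding R_def using \<open>mle m' z\<close> by simp
        have "mle m' m" using \<open>mle m' z\<close> z(1) mle_trans[of m' z m] by blast
        then have "m' \<in> {m'\<in>M. mle m' m}" using \<open>m' \<in> M\<close> by blast
        then show False using z(2)[OF \<open>(m', z) \<in> R\<close>] by blast
      qed
    qed
    moreover obtain u where "m = z + u" using mle_ex[of z m] z(1) by blast
    ultimately show "m \<in> upc F" unfolding upc_def by blast
  qed
  moreover have "F \<subseteq> M" unfolding F_def by blast
  ultimately show ?thesis using \<open>finite F\<close> by blast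
qed



lemma ideal_sum_comm: "ideal_sum I J = ideal_sum J I"
  unfolding ideal_sum_def by (auto, (metis add.commute)+)

definition dec :: "(('v \<Rightarrow>\<^sub>0 nat) \<Rightarrow> ('v \<Rightarrow>\<^sub>0 nat) \<Rightarrow> bool) \<Rightarrow> ('v, 'a::field) mpoly set \<Rightarrow> ('v, 'a) mpoly set \<Rightarrow> ('v, 'a) mpoly \<Rightarrow> bool" where
  "dec ord X Y h \<longleftrightarrow> (\<exists>f\<in>X. \<exists>g\<in>Y. h = f + g \<and> (f = 0 \<or> ord (lm ord f) (lm ord h)) \<and>
      (g = 0 \<or> ord (lm ord g) (lm ord h)) \<and> (f = 0 \<or> g = 0 \<or> lm ord f \<noteq> lm ord g))"

lemma dec_sym: "dec ord X Y h \<Longrightarrow> dec ord Y X h"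
  unfolding dec_def by (metis add.commute)

locale mordf = mordl ord for ord :: "('v::finite \<Rightarrow>\<^sub>0 nat) \<Rightarrow> ('v \<Rightarrow>\<^sub>0 nat) \<Rightarrow> bool"
begin

lemma wf_ord: "wf {(s, t). ord s t \<and> s \<noteq> t}"
proof (rule wf_dickson)
  show "trans {(s, t). ord s t \<and> s \<noteq> t}" unfolding trans_def
  proof (intro allI impI)
    fix x y z :: "'v \<Rightarrow>\<^sub>0 nat"
    assume "(x, y) \<in> {(s, t). ord s t \<and> s \<noteq> t}" "(y, z) \<in> {(s, t). ord s t \<and> s \<noteq> t}"
    then have a: "ord x y" "ord y z" "x \<noteq> y" "y \<noteq> z" by auto
    have "ord x z" using trans[OF a(1) a(2)] .
    moreover have "x \<noteq> z"
    proof
      assume "x = z" then have "ord z y" using a(1) by simp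
      then show False using antisym[OF a(2)] a(4) by simp
    qed
    ultimately show "(x, z) \<in> {(s, t). ord s t \<and> s \<noteq> t}" by simp
  qed
  fix s t assume st: "(s, t) \<in> {(s, t). ord s t \<and> s \<noteq> t}" "mle t s"
  then obtain u where "s = t + u" using mle_ex[of t s] by blast
  then have "ord t s" using le_plus by simp
  then show False using st(1) antisym by auto
qed

lemma lt_le: "ord a b \<Longrightarrow> ord b c \<Longrightarrow> b \<noteq> c \<Longrightarrow> a \<noteq> c"
  using antisym by blast

lemma dec_step:
  fixes X Y :: "('v, 'a::field) mpoly set"
  assumes X: "is_ideal X" and Y: "is_ideal Y"
    and h: "h \<in> ideal_sum X Y" "h \<noteq> 0"
    and f1: "f1 \<in> X" "f1 \<noteq> 0" "lm ord f1 = lm ord h"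
    and IH: "\<And>h'. h' \<in> ideal_sum X Y \<Longrightarrow> h' \<noteq> 0 \<Longrightarrow> ord (lm ord h') (lm ord h) \<Longrightarrow> lm ord h' \<noteq> lm ord h
             \<Longrightarrow> dec ord X Y h'"
  shows "dec ord X Y h"
proof -
  let ?t = "lm ord h"
  define c where "c = Poly_Mapping.lookup h ?t / Poly_Mapping.lookup f1 ?t"
  have hk: "Poly_Mapping.lookup h ?t \<noteq> 0" using lm_in[OF h(2)] by (simp add: in_keys_iff)
  have fk: "Poly_Mapping.lookup f1 ?t \<noteq> 0" using lm_in[OF f1(2)] f1(3) by (simp add: in_keys_iff)
  have c0: "c \<noteq> 0" unfolding c_def using hk fk by simp
  define f1' where "f1' = Poly_Mapping.single 0 c * f1"
  have f1'X: "f1' \<in> X" unfolding f1'_def by (rule ideal_mult[OF X f1(1)])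
  have f1'nz: "f1' \<noteq> 0" and f1'lm: "lm ord f1' = ?t"
    using lm_single_mult[OF f1(2) c0, of 0] f1(3) unfolding f1'_def by auto
  have f1'co: "Poly_Mapping.lookup f1' ?t = Poly_Mapping.lookup h ?t"
    using lookup_single_mult[of 0 c f1 ?t] fk unfolding f1'_def c_def by simp
  define h' where "h' = h - f1'"
  have XS: "X \<subseteq> ideal_sum X Y" by (rule ideal_sum_left[OF Y])
  have h'S: "h' \<in> ideal_sum X Y" unfolding h'_def
    using ideal_diff[OF ideal_sum_ideal[OF X Y] h(1)] f1'X XS by blast
  show ?thesis
  proof (cases "h' = 0")
    case True
    then have "h = f1' + 0" unfolding h'_def by simp
    moreover have "(0::('v, 'a) mpoly) \<in> Y" by (rule ideal_0[OF Y])
    ultimately show ?thesis unfolding dec_def using f1'X f1'lm refl[of "lm ord h"]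
      by (intro bexI[of _ f1'] bexI[of _ 0]) auto
  next
    case False
    have h'lt: "ord (lm ord h') ?t \<and> lm ord h' \<noteq> ?t"
    proof
      have "lm ord h' \<in> Poly_Mapping.keys h'" by (rule lm_in[OF False])
      then have "lm ord h' \<in> Poly_Mapping.keys h \<or> lm ord h' \<in> Poly_Mapping.keys f1'"
        using keys_diff[of h f1'] unfolding h'_def by auto
      then show "ord (lm ord h') ?t" using lm_max f1'lm by metis
      have "Poly_Mapping.lookup h' ?t = 0" unfolding h'_def using f1'co by (simp add: lookup_minus)
      then show "lm ord h' \<noteq> ?t" using \<open>lm ord h' \<in> Poly_Mapping.keys h'\<close> by (auto simp: in_keys_iff)
    qed
    have "dec ord X Y h'" using IH[OF h'S False] h'lt by blast
    then obtain f' g' where fg: "f' \<in> X" "g' \<in> Y" "h' = f' + g'"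
      "f' = 0 \<or> ord (lm ord f') (lm ord h')" "g' = 0 \<or> ord (lm ord g') (lm ord h')"
      unfolding dec_def by blast
    have f'c: "f' = 0 \<or> (ord (lm ord f') (lm ord f1') \<and> lm ord f' \<noteq> lm ord f1')"
      using fg(4) h'lt f1'lm trans lt_le by metis
    have g'c: "g' = 0 \<or> (ord (lm ord g') ?t \<and> lm ord g' \<noteq> ?t)"
      using fg(5) h'lt trans lt_le by metis
    have sum: "f1' + f' \<noteq> 0 \<and> lm ord (f1' + f') = lm ord f1'" by (rule lm_add_dom[OF f1'nz f'c])
    have "h = (f1' + f') + g'" using fg(3) unfolding h'_def by (simp add: algebra_simps)
    moreover have "f1' + f' \<in> X" by (rule ideal_add[OF X f1'X fg(1)])
    moreover have "ord (lm ord (f1' + f')) ?t" using sum f1'lm refl by simp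
    moreover have "g' = 0 \<or> ord (lm ord g') ?t" using g'c by blast
    moreover have "g' = 0 \<or> lm ord (f1' + f') \<noteq> lm ord g'" using g'c sum f1'lm by auto
    ultimately show ?thesis unfolding dec_def using fg(2) by blast
  qed
qed

lemma dec_all:
  fixes X Y :: "('v, 'a::field) mpoly set"
  assumes X: "is_ideal X" and Y: "is_ideal Y"
    and cond: "LMs ord (ideal_sum X Y) \<subseteq> LMs ord X \<union> LMs ord Y"
  shows "h \<in> ideal_sum X Y \<Longrightarrow> h \<noteq> 0 \<Longrightarrow> dec ord X Y h"
proof -
  have "\<forall>h. h \<in> ideal_sum X Y \<and> h \<noteq> 0 \<and> lm ord h = t \<longrightarrow> dec ord X Y h" for t
  proof (induction t rule: wf_induct[OF wf_ord])
    case (1 t)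
    show ?case
    proof (intro allI impI)
      fix h assume hh: "h \<in> ideal_sum X Y \<and> h \<noteq> 0 \<and> lm ord h = t"
      have IH: "dec ord X Y h'" if "h' \<in> ideal_sum X Y" "h' \<noteq> 0" "ord (lm ord h') (lm ord h)" "lm ord h' \<noteq> lm ord h" for h'
        using 1[rule_format, of "lm ord h'" h'] that hh by auto
      have "lm ord h \<in> LMs ord (ideal_sum X Y)" unfolding LMs_def using hh by blast
      then have "lm ord h \<in> LMs ord X \<or> lm ord h \<in> LMs ord Y" using cond by blast
      then show "dec ord X Y h"
      proof
        assume "lm ord h \<in> LMs ord X"
        then obtain f1 where "f1 \<in> X" "f1 \<noteq> 0" "lm ord f1 = lm ord h" unfolding LMs_def by auto
        then show ?thesis using dec_step[OF X Y _ _ _ _ _ IH] hh by blast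
      next
        assume "lm ord h \<in> LMs ord Y"
        then obtain f1 where "f1 \<in> Y" "f1 \<noteq> 0" "lm ord f1 = lm ord h" unfolding LMs_def by auto
        moreover have "h \<in> ideal_sum Y X" using hh ideal_sum_comm by blast
        moreover have IH': "dec ord Y X h'" if "h' \<in> ideal_sum Y X" "h' \<noteq> 0" "ord (lm ord h') (lm ord h)" "lm ord h' \<noteq> lm ord h" for h'
          using IH[of h'] that ideal_sum_comm dec_sym by metis
        ultimately have "dec ord Y X h" using dec_step[OF Y X _ _ _ _ _ IH'] hh by blast
        then show ?thesis by (rule dec_sym)
      qed
    qed
  qed
  then show "h \<in> ideal_sum X Y \<Longrightarrow> h \<noteq> 0 \<Longrightarrow> dec ord X Y h" by blast
qed

end


lemma mle_mlcm1: "mle s (mlcm s t)" unfolding mle_def by (simp add: mlcm.rep_eq)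
lemma mle_mlcm2: "mle t (mlcm s t)" unfolding mle_def by (simp add: mlcm.rep_eq)
lemma mlcm_idem: "mlcm t t = t" by (rule poly_mapping_eqI) (simp add: mlcm.rep_eq)

context mordf begin

lemma LMs_upc_mem: "is_ideal I \<Longrightarrow> s \<in> LMs ord I \<Longrightarrow> mle s t \<Longrightarrow> t \<in> LMs ord I"
proof -
  assume I: "is_ideal I" and s: "s \<in> LMs ord I" and st: "mle s t"
  obtain u where "t = s + u" using mle_ex[OF st] by blast
  then have "t \<in> upc (LMs ord I)" unfolding upc_def using s by blast
  then show ?thesis using LMs_upc[OF I] by simp
qed

lemma gb_exists:
  fixes I :: "('v, 'a::field) mpoly set"
  assumes I: "is_ideal I"
  shows "\<exists>G. groebner_basis ord I G"
proof -
  obtain F where F: "F \<subseteq> LMs ord I" "finite F" "LMs ord I \<subseteq> upc F"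
    using finite_basis[of "LMs ord I"] by blast
  define pick where "pick t = (SOME f. f \<in> I \<and> f \<noteq> 0 \<and> lm ord f = t)" for t
  have pick: "pick t \<in> I \<and> pick t \<noteq> 0 \<and> lm ord (pick t) = t" if "t \<in> F" for t
  proof -
    have "\<exists>f. f \<in> I \<and> f \<noteq> 0 \<and> lm ord f = t" using F(1) that unfolding LMs_def by blast
    then show ?thesis unfolding pick_def by (rule someI_ex)
  qed
  define G where "G = pick ` F"
  have m1: "{mono (lm ord g) | g. g \<in> G} = mono ` F"
  proof
    show "{mono (lm ord g) | g. g \<in> G} \<subseteq> mono ` F" unfolding G_def using pick by force
    show "mono ` F \<subseteq> {mono (lm ord g) | g. g \<in> G}"
    proof
      fix x assume "x \<in> mono ` F"
      then obtain t where "t \<in> F" "x = mono t" by blast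
      then have "x = mono (lm ord (pick t))" "pick t \<in> G" using pick unfolding G_def by auto
      then show "x \<in> {mono (lm ord g) | g. g \<in> G}" by blast
    qed
  qed
  have m2: "upc F = LMs ord I"
  proof
    show "upc F \<subseteq> LMs ord I" using F(1) LMs_upc[OF I] unfolding upc_def by blast
    show "LMs ord I \<subseteq> upc F" by (rule F(3))
  qed
  have g1: "ideal_gen {mono (lm ord g) | g. g \<in> G} = init_ideal ord I"
    unfolding init_char[OF I] m1 MI m2 ..
  have g2: "finite G" "G \<subseteq> I" "0 \<notin> G" unfolding G_def using F(2) pick by auto
  have "groebner_basis ord I G" unfolding groebner_basis_def using g1 g2 by simp
  then show ?thesis by blast
qed

lemma A_iff:
  fixes J E :: "('v, 'a::field) mpoly set"
  assumes J: "is_ideal J" and E: "is_ideal E"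
  shows "(init_ideal ord (ideal_sum J E) = ideal_sum (init_ideal ord J) (init_ideal ord E))
     \<longleftrightarrow> LMs ord (ideal_sum J E) \<subseteq> LMs ord J \<union> LMs ord E"
proof
  have S: "is_ideal (ideal_sum J E)" by (rule ideal_sum_ideal[OF J E])
  assume A: "init_ideal ord (ideal_sum J E) = ideal_sum (init_ideal ord J) (init_ideal ord E)"
  show "LMs ord (ideal_sum J E) \<subseteq> LMs ord J \<union> LMs ord E"
  proof
    fix t assume "t \<in> LMs ord (ideal_sum J E)"
    then have "(mono t :: ('v, 'a) mpoly) \<in> init_ideal ord (ideal_sum J E)" using mono_in_init[OF S] by blast
    then have "(mono t :: ('v, 'a) mpoly) \<in> ideal_sum (init_ideal ord J) (init_ideal ord E)" using A by simp
    then obtain p q where pq: "mono t = p + q" "p \<in> init_ideal ord J" "q \<in> init_ideal ord E"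
      unfolding ideal_sum_def by blast
    have "t \<in> Poly_Mapping.keys (mono t :: ('v, 'a) mpoly)" by (simp add: keys_mono)
    then have "t \<in> Poly_Mapping.keys p \<or> t \<in> Poly_Mapping.keys q" using keys_add[of p q] pq(1) by auto
    then show "t \<in> LMs ord J \<union> LMs ord E" using pq(2,3) init_char[OF J] init_char[OF E] by auto
  qed
next
  assume c: "LMs ord (ideal_sum J E) \<subseteq> LMs ord J \<union> LMs ord E"
  have "init_ideal ord (ideal_sum J E) \<subseteq> ideal_gen (mono ` LMs ord J \<union> mono ` LMs ord E)"
    unfolding init_LMs by (rule ideal_gen_mono) (use c in blast)
  also have "\<dots> = ideal_sum (init_ideal ord J) (init_ideal ord E)"
    by (simp add: ideal_gen_Un init_LMs)
  finally have 1: "init_ideal ord (ideal_sum J E) \<subseteq> ideal_sum (init_ideal ord J) (init_ideal ord E)" .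
  have "init_ideal ord J \<subseteq> init_ideal ord (ideal_sum J E)" unfolding init_LMs
    by (intro ideal_gen_mono image_mono LMs_mono ideal_sum_left[OF E])
  moreover have "init_ideal ord E \<subseteq> init_ideal ord (ideal_sum J E)" unfolding init_LMs
    by (intro ideal_gen_mono image_mono LMs_mono ideal_sum_right[OF J])
  ultimately have 2: "ideal_sum (init_ideal ord J) (init_ideal ord E) \<subseteq> init_ideal ord (ideal_sum J E)"
    unfolding ideal_sum_def using ideal_add[OF ideal_gen_ideal] unfolding init_LMs by blast
  show "init_ideal ord (ideal_sum J E) = ideal_sum (init_ideal ord J) (init_ideal ord E)"
    using 1 2 by blast
qed

lemma D_iff:
  fixes J E :: "('v, 'a::field) mpoly set"
  assumes J: "is_ideal J" and E: "is_ideal E"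
  shows "(init_ideal ord (J \<inter> E) = init_ideal ord J \<inter> init_ideal ord E)
     \<longleftrightarrow> LMs ord J \<inter> LMs ord E \<subseteq> LMs ord (J \<inter> E)"
proof
  have JE: "is_ideal (J \<inter> E)" by (rule ideal_inter[OF J E])
  assume D: "init_ideal ord (J \<inter> E) = init_ideal ord J \<inter> init_ideal ord E"
  show "LMs ord J \<inter> LMs ord E \<subseteq> LMs ord (J \<inter> E)"
  proof
    fix t assume "t \<in> LMs ord J \<inter> LMs ord E"
    then have "(mono t :: ('v, 'a) mpoly) \<in> init_ideal ord J \<inter> init_ideal ord E"
      using mono_in_init[OF J] mono_in_init[OF E] by blast
    then show "t \<in> LMs ord (J \<inter> E)" using D mono_in_init[OF JE] by metis
  qed
next
  assume c: "LMs ord J \<inter> LMs ord E \<subseteq> LMs ord (J \<inter> E)"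
  have "LMs ord (J \<inter> E) \<subseteq> LMs ord J" "LMs ord (J \<inter> E) \<subseteq> LMs ord E" by (rule LMs_mono, blast)+
  then have eq: "LMs ord (J \<inter> E) = LMs ord J \<inter> LMs ord E" using c by blast
  show "init_ideal ord (J \<inter> E) = init_ideal ord J \<inter> init_ideal ord E"
    unfolding init_char[OF J] init_char[OF E] init_char[OF ideal_inter[OF J E]] eq by blast
qed

lemma F1_iff:
  fixes J E :: "('v, 'a::field) mpoly set"
  assumes J: "is_ideal J" and E: "is_ideal E"
  shows "(\<forall>f g. f \<in> J \<and> f \<noteq> 0 \<and> g \<in> E \<and> g \<noteq> 0 \<longrightarrow>
               (\<exists>h \<in> J \<inter> E. h \<noteq> 0 \<and> lm ord h = mlcm (lm ord f) (lm ord g)))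
     \<longleftrightarrow> LMs ord J \<inter> LMs ord E \<subseteq> LMs ord (J \<inter> E)"
proof
  assume F: "\<forall>f g. f \<in> J \<and> f \<noteq> 0 \<and> g \<in> E \<and> g \<noteq> 0 \<longrightarrow>
               (\<exists>h \<in> J \<inter> E. h \<noteq> 0 \<and> lm ord h = mlcm (lm ord f) (lm ord g))"
  show "LMs ord J \<inter> LMs ord E \<subseteq> LMs ord (J \<inter> E)"
  proof
    fix t assume "t \<in> LMs ord J \<inter> LMs ord E"
    then obtain f g where fg: "f \<in> J" "f \<noteq> 0" "lm ord f = t" "g \<in> E" "g \<noteq> 0" "lm ord g = t"
      unfolding LMs_def by auto
    then obtain h where "h \<in> J \<inter> E" "h \<noteq> 0" "lm ord h = mlcm t t" using F by metis
    then show "t \<in> LMs ord (J \<inter> E)" unfolding LMs_def mlcm_idem by blast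
  qed
next
  assume c: "LMs ord J \<inter> LMs ord E \<subseteq> LMs ord (J \<inter> E)"
  show "\<forall>f g. f \<in> J \<and> f \<noteq> 0 \<and> g \<in> E \<and> g \<noteq> 0 \<longrightarrow>
               (\<exists>h \<in> J \<inter> E. h \<noteq> 0 \<and> lm ord h = mlcm (lm ord f) (lm ord g))"
  proof (intro allI impI)
    fix f g assume fg: "f \<in> J \<and> f \<noteq> 0 \<and> g \<in> E \<and> g \<noteq> 0"
    have "lm ord f \<in> LMs ord J" "lm ord g \<in> LMs ord E" unfolding LMs_def using fg by blast+
    then have "mlcm (lm ord f) (lm ord g) \<in> LMs ord J" "mlcm (lm ord f) (lm ord g) \<in> LMs ord E"
      using LMs_upc_mem[OF J _ mle_mlcm1] LMs_upc_mem[OF E _ mle_mlcm2] by blast+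
    then have "mlcm (lm ord f) (lm ord g) \<in> LMs ord (J \<inter> E)" using c by blast
    then show "\<exists>h \<in> J \<inter> E. h \<noteq> 0 \<and> lm ord h = mlcm (lm ord f) (lm ord g)" unfolding LMs_def by force
  qed
qed

lemma F2_iff:
  fixes J E :: "('v, 'a::field) mpoly set"
  assumes J: "is_ideal J" and E: "is_ideal E"
  shows "(\<forall>h \<in> ideal_sum J E. h \<noteq> 0 \<longrightarrow>
               (\<exists>f \<in> J. \<exists>g \<in> E. h = f - g \<and>
                  (f = 0 \<or> g = 0 \<or> (f \<noteq> 0 \<and> g \<noteq> 0 \<and> lm ord f \<noteq> lm ord g))))
     \<longleftrightarrow> LMs ord (ideal_sum J E) \<subseteq> LMs ord J \<union> LMs ord E"
proof
  assume F: "\<forall>h \<in> ideal_sum J E. h \<noteq> 0 \<longrightarrow>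
               (\<exists>f \<in> J. \<exists>g \<in> E. h = f - g \<and>
                  (f = 0 \<or> g = 0 \<or> (f \<noteq> 0 \<and> g \<noteq> 0 \<and> lm ord f \<noteq> lm ord g)))"
  show "LMs ord (ideal_sum J E) \<subseteq> LMs ord J \<union> LMs ord E"
  proof
    fix t assume "t \<in> LMs ord (ideal_sum J E)"
    then obtain h where h: "h \<in> ideal_sum J E" "h \<noteq> 0" "lm ord h = t" unfolding LMs_def by blast
    then obtain f g where fg: "f \<in> J" "g \<in> E" "h = f - g"
      "f = 0 \<or> g = 0 \<or> (f \<noteq> 0 \<and> g \<noteq> 0 \<and> lm ord f \<noteq> lm ord g)" using F by blast
    show "t \<in> LMs ord J \<union> LMs ord E"
    proof (cases "f = 0")
      case True
      then have "h = - g" "g \<noteq> 0" using fg h by auto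
      then have "lm ord g = t" using h(3) lm_uminus by metis
      then show ?thesis unfolding LMs_def using fg(2) \<open>g \<noteq> 0\<close> by blast
    next
      case f0: False
      show ?thesis
      proof (cases "g = 0")
        case True
        then have "h = f" using fg by simp
        then show ?thesis unfolding LMs_def using fg(1) h by blast
      next
        case False
        then have "lm ord f \<noteq> lm ord g" using fg(4) f0 by blast
        then have "lm ord h = lm ord f \<or> lm ord h = lm ord g" using lm_diff[OF f0 False] fg(3) by blast
        then show ?thesis unfolding LMs_def using fg(1,2) f0 False h(3) by blast
      qed
    qed
  qed
next
  assume c: "LMs ord (ideal_sum J E) \<subseteq> LMs ord J \<union> LMs ord E"
  show "\<forall>h \<in> ideal_sum J E. h \<noteq> 0 \<longrightarrow>
               (\<exists>f \<in> J. \<exists>g \<in> E. h = f - g \<and>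
                  (f = 0 \<or> g = 0 \<or> (f \<noteq> 0 \<and> g \<noteq> 0 \<and> lm ord f \<noteq> lm ord g)))"
  proof (intro ballI impI)
    fix h assume "h \<in> ideal_sum J E" "h \<noteq> 0"
    then have "dec ord J E h" by (rule dec_all[OF J E c])
    then obtain f g where fg: "f \<in> J" "g \<in> E" "h = f + g" "f = 0 \<or> g = 0 \<or> lm ord f \<noteq> lm ord g"
      unfolding dec_def by blast
    have "- g \<in> E" by (rule ideal_uminus[OF E fg(2)])
    moreover have "h = f - (- g)" using fg(3) by simp
    moreover have "f = 0 \<or> - g = 0 \<or> (f \<noteq> 0 \<and> - g \<noteq> 0 \<and> lm ord f \<noteq> lm ord (- g))"
      using fg(4) lm_uminus[of g] by auto
    ultimately show "\<exists>f \<in> J. \<exists>g \<in> E. h = f - g \<and>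
                  (f = 0 \<or> g = 0 \<or> (f \<noteq> 0 \<and> g \<noteq> 0 \<and> lm ord f \<noteq> lm ord g))"
      using fg(1) by blast
  qed
qed

lemma GU:
  fixes J E :: "('v, 'a::field) mpoly set"
  assumes J: "is_ideal J" and E: "is_ideal E"
    and GJ: "groebner_basis ord J GJ" and GE: "groebner_basis ord E GE"
  shows "groebner_basis ord (ideal_sum J E) (GJ \<union> GE)
     \<longleftrightarrow> init_ideal ord (ideal_sum J E) = ideal_sum (init_ideal ord J) (init_ideal ord E)"
proof -
  have fin: "finite (GJ \<union> GE)" "0 \<notin> GJ \<union> GE" using GJ GE unfolding groebner_basis_def by auto
  have sub: "GJ \<union> GE \<subseteq> ideal_sum J E"
    using GJ GE ideal_sum_left[OF E] ideal_sum_right[OF J] unfolding groebner_basis_def by blast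
  have se: "{mono (lm ord g) | g. g \<in> GJ \<union> GE} = {mono (lm ord g) | g. g \<in> GJ} \<union> {mono (lm ord g) | g. g \<in> GE}"
    by blast
  have gj: "init_ideal ord J = ideal_gen {mono (lm ord g) | g. g \<in> GJ}" using GJ unfolding groebner_basis_def by blast
  have ge: "init_ideal ord E = ideal_gen {mono (lm ord g) | g. g \<in> GE}" using GE unfolding groebner_basis_def by blast
  have eq: "ideal_gen {mono (lm ord g) | g. g \<in> GJ \<union> GE} = ideal_sum (init_ideal ord J) (init_ideal ord E)"
    unfolding se ideal_gen_Un gj ge ..
  show ?thesis unfolding groebner_basis_def[of ord "ideal_sum J E"] eq using fin sub by auto
qed

end


context mordf begin

lemma below:
  fixes p :: "('v, 'a::zero) mpoly"
  assumes "p \<noteq> 0" "\<And>x. x \<in> Poly_Mapping.keys p \<Longrightarrow> ord x s" "Poly_Mapping.lookup p s = 0"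
  shows "ord (lm ord p) s \<and> lm ord p \<noteq> s"
proof
  have k: "lm ord p \<in> Poly_Mapping.keys p" by (rule lm_in[OF assms(1)])
  then show "ord (lm ord p) s" by (rule assms(2))
  show "lm ord p \<noteq> s" using k assms(3) by (auto simp: in_keys_iff)
qed

lemma bound_exists:
  fixes f g :: "('v, 'a::zero) mpoly"
  assumes "f \<noteq> 0 \<or> g \<noteq> 0"
  shows "\<exists>m. (f = 0 \<or> ord (lm ord f) m) \<and> (g = 0 \<or> ord (lm ord g) m) \<and>
             ((f \<noteq> 0 \<and> m = lm ord f) \<or> (g \<noteq> 0 \<and> m = lm ord g))"
proof (cases "f = 0")
  case True then show ?thesis using assms refl by (intro exI[of _ "lm ord g"]) auto
next
  case f: False
  show ?thesis
  proof (cases "g = 0")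
    case True then show ?thesis using f refl by (intro exI[of _ "lm ord f"]) auto
  next
    case g: False
    show ?thesis
    proof (cases "ord (lm ord f) (lm ord g)")
      case True then show ?thesis using f g refl by (intro exI[of _ "lm ord g"]) auto
    next
      case False then have "ord (lm ord g) (lm ord f)" using total by blast
      then show ?thesis using f g refl by (intro exI[of _ "lm ord f"]) auto
    qed
  qed
qed

lemma scale:
  fixes k :: "('v, 'a::field) mpoly"
  assumes "k \<noteq> 0" "Poly_Mapping.lookup f s \<noteq> 0" "lm ord k = s"
  defines "k' \<equiv> Poly_Mapping.single 0 (Poly_Mapping.lookup f s / Poly_Mapping.lookup k s) * k"
  shows "k' \<noteq> 0 \<and> lm ord k' = s \<and> Poly_Mapping.lookup k' s = Poly_Mapping.lookup f s"
proof -
  have kk: "Poly_Mapping.lookup k s \<noteq> 0" using lm_in[OF assms(1)] assms(3) by (simp add: in_keys_iff)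
  then have c0: "Poly_Mapping.lookup f s / Poly_Mapping.lookup k s \<noteq> 0" using assms(2) by simp
  have "k' \<noteq> 0 \<and> lm ord k' = s" using lm_single_mult[OF assms(1) c0, of 0] assms(3) unfolding k'_def by simp
  moreover have "Poly_Mapping.lookup k' s = Poly_Mapping.lookup f s"
    using lookup_single_mult[of 0 "Poly_Mapping.lookup f s / Poly_Mapping.lookup k s" k s] kk unfolding k'_def by simp
  ultimately show ?thesis by blast
qed

lemma A_D:
  fixes J E :: "('v, 'a::field) mpoly set"
  assumes J: "is_ideal J" and E: "is_ideal E"
    and c: "LMs ord (ideal_sum J E) \<subseteq> LMs ord J \<union> LMs ord E"
  shows "LMs ord J \<inter> LMs ord E \<subseteq> LMs ord (J \<inter> E)"
proof
  fix t assume "t \<in> LMs ord J \<inter> LMs ord E"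
  then obtain f g where fg: "f \<in> J" "f \<noteq> 0" "lm ord f = t" "g \<in> E" "g \<noteq> 0" "lm ord g = t"
    unfolding LMs_def by auto
  have ft: "Poly_Mapping.lookup f t \<noteq> 0" using lm_in[OF fg(2)] fg(3) by (simp add: in_keys_iff)
  define g' where "g' = Poly_Mapping.single 0 (Poly_Mapping.lookup f t / Poly_Mapping.lookup g t) * g"
  have g': "g' \<noteq> 0" "lm ord g' = t" "Poly_Mapping.lookup g' t = Poly_Mapping.lookup f t"
    using scale[OF fg(5) ft fg(6)] unfolding g'_def by auto
  have g'E: "g' \<in> E" unfolding g'_def by (rule ideal_mult[OF E fg(4)])
  define d where "d = f - g'"
  show "t \<in> LMs ord (J \<inter> E)"
  proof (cases "d = 0")
    case True
    then have "f = g'" unfolding d_def by simp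
    then show ?thesis unfolding LMs_def using fg g'E by blast
  next
    case False
    have dS: "d \<in> ideal_sum J E" unfolding ideal_sum_def d_def
      using fg(1) ideal_uminus[OF E g'E] by (intro CollectI exI[of _ f] exI[of _ "- g'"]) simp
    have dlt: "ord (lm ord d) t \<and> lm ord d \<noteq> t"
    proof (rule below[OF False])
      fix x assume "x \<in> Poly_Mapping.keys d"
      then have "x \<in> Poly_Mapping.keys f \<or> x \<in> Poly_Mapping.keys g'" using keys_diff[of f g'] unfolding d_def by auto
      then show "ord x t" using lm_max fg(3) g'(2) by metis
    next
      show "Poly_Mapping.lookup d t = 0" unfolding d_def using g'(3) by (simp add: lookup_minus)
    qed
    have "dec ord J E d" by (rule dec_all[OF J E c dS False])
    then obtain f' g'' where fg': "f' \<in> J" "g'' \<in> E" "d = f' + g''" "f' = 0 \<or> ord (lm ord f') (lm ord d)"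
      unfolding dec_def by blast
    have f'c: "- f' = 0 \<or> (ord (lm ord (- f')) (lm ord f) \<and> lm ord (- f') \<noteq> lm ord f)"
      using fg'(4) dlt fg(3) trans lt_le lm_uminus[of f'] by (metis neg_equal_0_iff_equal)
    have hh: "f + - f' \<noteq> 0 \<and> lm ord (f + - f') = lm ord f" by (rule lm_add_dom[OF fg(2) f'c])
    have "f - f' = g' + g''" using fg'(3) unfolding d_def by (simp add: algebra_simps)
    moreover have "f - f' \<in> J" by (rule ideal_diff[OF J fg(1) fg'(1)])
    moreover have "g' + g'' \<in> E" by (rule ideal_add[OF E g'E fg'(2)])
    ultimately have "f - f' \<in> J \<inter> E" by simp
    moreover have "f - f' \<noteq> 0" "lm ord (f - f') = t" using hh fg(3) by auto
    ultimately show ?thesis unfolding LMs_def by blast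
  qed
qed

lemma D_A:
  fixes J E :: "('v, 'a::field) mpoly set"
  assumes J: "is_ideal J" and E: "is_ideal E"
    and c: "LMs ord J \<inter> LMs ord E \<subseteq> LMs ord (J \<inter> E)"
  shows "LMs ord (ideal_sum J E) \<subseteq> LMs ord J \<union> LMs ord E"
proof -
  have R: "\<forall>f g. f \<in> J \<and> g \<in> E \<and> f + g \<noteq> 0 \<and> (f = 0 \<or> ord (lm ord f) t) \<and> (g = 0 \<or> ord (lm ord g) t)
           \<longrightarrow> lm ord (f + g) \<in> LMs ord J \<union> LMs ord E" for t
  proof (induction t rule: wf_induct[OF wf_ord])
    case (1 t)
    show ?case
    proof (intro allI impI)
      fix f g assume H: "f \<in> J \<and> g \<in> E \<and> f + g \<noteq> 0 \<and> (f = 0 \<or> ord (lm ord f) t) \<and> (g = 0 \<or> ord (lm ord g) t)"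
      show "lm ord (f + g) \<in> LMs ord J \<union> LMs ord E"
      proof (cases "f = 0")
        case True
        then show ?thesis unfolding LMs_def using H by auto
      next
        case f0: False
        show ?thesis
        proof (cases "g = 0")
          case True
          then show ?thesis unfolding LMs_def using H by auto
        next
          case g0: False
          show ?thesis
          proof (cases "lm ord f = lm ord g")
            case False
            then have "lm ord (f - - g) = lm ord f \<or> lm ord (f - - g) = lm ord (- g)"
              using lm_diff[of f "- g"] f0 g0 lm_uminus[of g] by auto
            then have "lm ord (f + g) = lm ord f \<or> lm ord (f + g) = lm ord g" using lm_uminus[of g] by simp
            then show ?thesis unfolding LMs_def using H f0 g0 by blast
          next
            case True
            define s where "s = lm ord f"
            have st: "ord s t" using H f0 unfolding s_def by blast
            have keysle: "ord x s" if "x \<in> Poly_Mapping.keys (f + g)" for x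
            proof -
              have "x \<in> Poly_Mapping.keys f \<or> x \<in> Poly_Mapping.keys g" using keys_add[of f g] that by auto
              then show ?thesis using lm_max True unfolding s_def by metis
            qed
            show ?thesis
            proof (cases "Poly_Mapping.lookup (f + g) s = 0")
              case False
              then have "lm ord (f + g) = s" using keysle by (intro lm_eqI) (auto simp: in_keys_iff)
              then show ?thesis unfolding LMs_def s_def using H f0 by blast
            next
              case canc: True
              have "s \<in> LMs ord J" unfolding LMs_def s_def using H f0 by blast
              moreover have "s \<in> LMs ord E" unfolding LMs_def s_def True using H g0 by blast
              ultimately have "s \<in> LMs ord J \<inter> LMs ord E" by blast
              then have "s \<in> LMs ord (J \<inter> E)" using c by blast
              then obtain k where k: "k \<in> J \<inter> E" "k \<noteq> 0" "lm ord k = s" unfolding LMs_def by auto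
              have fs: "Poly_Mapping.lookup f s \<noteq> 0" using lm_in[OF f0] unfolding s_def by (simp add: in_keys_iff)
              define k' where "k' = Poly_Mapping.single 0 (Poly_Mapping.lookup f s / Poly_Mapping.lookup k s) * k"
              have k': "k' \<noteq> 0" "lm ord k' = s" "Poly_Mapping.lookup k' s = Poly_Mapping.lookup f s"
                using scale[OF k(2) fs k(3)] unfolding k'_def by auto
              have k'JE: "k' \<in> J \<inter> E" unfolding k'_def using k(1) ideal_mult[OF J] ideal_mult[OF E] by blast
              define f1 where "f1 = f - k'"
              define g1 where "g1 = g + k'"
              have f1J: "f1 \<in> J" unfolding f1_def using ideal_diff[OF J] H k'JE by blast
              have g1E: "g1 \<in> E" unfolding g1_def using ideal_add[OF E] H k'JE by blast
              have sum: "f1 + g1 = f + g" unfolding f1_def g1_def by simp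
              have f1s: "Poly_Mapping.lookup f1 s = 0" unfolding f1_def using k'(3) by (simp add: lookup_minus)
              have g1s: "Poly_Mapping.lookup g1 s = 0" unfolding g1_def using k'(3) canc by (simp add: lookup_add add.commute)
              have f1lt: "f1 = 0 \<or> (ord (lm ord f1) s \<and> lm ord f1 \<noteq> s)"
              proof (cases "f1 = 0")
                case False
                show ?thesis
                proof (rule disjI2, rule below[OF False _ f1s])
                  fix x assume "x \<in> Poly_Mapping.keys f1"
                  then have "x \<in> Poly_Mapping.keys f \<or> x \<in> Poly_Mapping.keys k'" using keys_diff[of f k'] unfolding f1_def by auto
                  then show "ord x s" using lm_max k'(2) unfolding s_def by metis
                qed
              qed simp
              have g1lt: "g1 = 0 \<or> (ord (lm ord g1) s \<and> lm ord g1 \<noteq> s)"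
              proof (cases "g1 = 0")
                case False
                show ?thesis
                proof (rule disjI2, rule below[OF False _ g1s])
                  fix x assume "x \<in> Poly_Mapping.keys g1"
                  then have "x \<in> Poly_Mapping.keys g \<or> x \<in> Poly_Mapping.keys k'" using keys_add[of g k'] unfolding g1_def by auto
                  then show "ord x s" using lm_max k'(2) True unfolding s_def by metis
                qed
              qed simp
              have nz: "f1 \<noteq> 0 \<or> g1 \<noteq> 0" using sum H by auto
              obtain m where m: "f1 = 0 \<or> ord (lm ord f1) m" "g1 = 0 \<or> ord (lm ord g1) m"
                "(f1 \<noteq> 0 \<and> m = lm ord f1) \<or> (g1 \<noteq> 0 \<and> m = lm ord g1)"
                using bound_exists[OF nz] by blast
              have ms: "ord m s \<and> m \<noteq> s" using m(3) f1lt g1lt by auto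
              have "(m, t) \<in> {(s, t). ord s t \<and> s \<noteq> t}"
                using ms st trans lt_le by blast
              then have "lm ord (f1 + g1) \<in> LMs ord J \<union> LMs ord E"
                using 1[rule_format, of m f1 g1] f1J g1E sum H m(1,2) by auto
              then show ?thesis using sum by simp
            qed
          qed
        qed
      qed
    qed
  qed
  show ?thesis
  proof
    fix t assume "t \<in> LMs ord (ideal_sum J E)"
    then obtain h where h: "h \<in> ideal_sum J E" "h \<noteq> 0" "lm ord h = t" unfolding LMs_def by blast
    then obtain f g where fg: "f \<in> J" "g \<in> E" "h = f + g" unfolding ideal_sum_def by blast
    then have nz: "f \<noteq> 0 \<or> g \<noteq> 0" using h by auto
    obtain m where m: "f = 0 \<or> ord (lm ord f) m" "g = 0 \<or> ord (lm ord g) m"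
      using bound_exists[OF nz] by blast
    show "t \<in> LMs ord J \<union> LMs ord E" using R[of m] fg h m by blast
  qed
qed

end

theorem theorem1p1:
  fixes ord :: "('v::finite \<Rightarrow>\<^sub>0 nat) \<Rightarrow> ('v \<Rightarrow>\<^sub>0 nat) \<Rightarrow> bool"
    and J E :: "('v, 'a::field) mpoly set"
  assumes "monomial_order ord"
    and "is_ideal J" and "is_ideal E"
  defines "A \<equiv> init_ideal ord (ideal_sum J E) = ideal_sum (init_ideal ord J) (init_ideal ord E)"
    and "B \<equiv> (\<forall>GJ GE. groebner_basis ord J GJ \<and> groebner_basis ord E GE
               \<longrightarrow> groebner_basis ord (ideal_sum J E) (GJ \<union> GE))"
    and "C \<equiv> (\<exists>GJ GE. groebner_basis ord J GJ \<and> groebner_basis ord E GE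
               \<and> groebner_basis ord (ideal_sum J E) (GJ \<union> GE))"
    and "D \<equiv> init_ideal ord (J \<inter> E) = init_ideal ord J \<inter> init_ideal ord E"
    and "F1 \<equiv> (\<forall>f g. f \<in> J \<and> f \<noteq> 0 \<and> g \<in> E \<and> g \<noteq> 0 \<longrightarrow>
               (\<exists>h \<in> J \<inter> E. h \<noteq> 0 \<and> lm ord h = mlcm (lm ord f) (lm ord g)))"
    and "F2 \<equiv> (\<forall>h \<in> ideal_sum J E. h \<noteq> 0 \<longrightarrow>
               (\<exists>f \<in> J. \<exists>g \<in> E. h = f - g \<and>
                  (f = 0 \<or> g = 0 \<or> (f \<noteq> 0 \<and> g \<noteq> 0 \<and> lm ord f \<noteq> lm ord g))))"
  shows "(A \<longleftrightarrow> B) \<and> (A \<longleftrightarrow> C) \<and> (A \<longleftrightarrow> D) \<and> (A \<longleftrightarrow> F1) \<and> (A \<longleftrightarrow> F2)"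
proof -
  interpret mordf ord by unfold_locales (rule assms(1))
  have J: "is_ideal J" and E: "is_ideal E" by fact+
  have a: "A \<longleftrightarrow> LMs ord (ideal_sum J E) \<subseteq> LMs ord J \<union> LMs ord E"
    unfolding A_def by (rule A_iff[OF J E])
  have d: "D \<longleftrightarrow> LMs ord J \<inter> LMs ord E \<subseteq> LMs ord (J \<inter> E)"
    unfolding D_def by (rule D_iff[OF J E])
  have f1: "F1 \<longleftrightarrow> LMs ord J \<inter> LMs ord E \<subseteq> LMs ord (J \<inter> E)"
    unfolding F1_def by (rule F1_iff[OF J E])
  have f2: "F2 \<longleftrightarrow> LMs ord (ideal_sum J E) \<subseteq> LMs ord J \<union> LMs ord E"
    unfolding F2_def by (rule F2_iff[OF J E])
  have ad: "A \<longleftrightarrow> D" using a d A_D[OF J E] D_A[OF J E] by blast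
  obtain GJ where gj: "groebner_basis ord J GJ" using gb_exists[OF J] by blast
  obtain GE where ge: "groebner_basis ord E GE" using gb_exists[OF E] by blast
  have gu: "\<And>GJ GE. groebner_basis ord J GJ \<Longrightarrow> groebner_basis ord E GE \<Longrightarrow>
      (groebner_basis ord (ideal_sum J E) (GJ \<union> GE) \<longleftrightarrow> A)"
    unfolding A_def by (rule GU[OF J E])
  have b: "A \<longleftrightarrow> B" unfolding B_def using gu gj ge by blast
  have c: "A \<longleftrightarrow> C" unfolding C_def using gu gj ge by blast
  show ?thesis using b c ad a d f1 f2 by blast
qed

end
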